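(* Let $(G,t)$ be a non-trivial problem instance, let $X$ be a tidy modulator of $G$, and let $B$ be a biconnected induced subgraph of $G-X$. Then $|\partial_G(V(B))|\le 2|X|$.
   Context: $\mathrm{tw}$ is treewidth. A problem instance is $(G,t)$ with $t\in\mathbb{N}$. A modulator of $G$ is $X$ with $\mathrm{tw}(G-X)\le 2$; tidy if also $\mathrm{tw}(G-(X\setminus\{x\}))\le 2$ for all $x\in X$. $(G,t)$ is trivial if $|V(G)|\le 4$, or $\mathrm{tw}(G)\le 2$, or $t=0$, or some connected subgraph $H$ of $G$ satisfies $\mathrm{tw}\big(G[N_G[H]]\cup\binom{N_G(H)}{2}\big)\le 2$ (where $N_G(H)$ is the set of vertices outside $H$ adjacent to $H$, $N_G[H]=V(H)\cup N_G(H)$, and $\cup\binom{N_G(H)}{2}$ adds all edges among $N_G(H)$); otherwise non-trivial. A graph is biconnected if it is connected and has no articulation vertex. For $U\subseteq V(G)$, $\partial_G(U)$ is the set of vertices of $U$ having a neighbour outside $U$. *)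

theory Defs
  imports Main
begin

definition wf_graph :: "'a set \<Rightarrow> 'a set set \<Rightarrow> bool" where
  "wf_graph V E \<longleftrightarrow> finite V \<and>
     (\<forall>e\<in>E. \<exists>u v. e = {u, v} \<and> u \<noteq> v \<and> u \<in> V \<and> v \<in> V)"

definition reachable :: "'a set \<Rightarrow> 'a set set \<Rightarrow> 'a \<Rightarrow> 'a \<Rightarrow> bool" where
  "reachable V E u v \<longleftrightarrow> u \<in> V \<and>
     (\<lambda>x y. x \<in> V \<and> y \<in> V \<and> {x, y} \<in> E)\<^sup>*\<^sup>* u v"

definition connected_graph :: "'a set \<Rightarrow> 'a set set \<Rightarrow> bool" where
  "connected_graph V E \<longleftrightarrow> V \<noteq> {} \<and> (\<forall>u\<in>V. \<forall>v\<in>V. reachable V E u v)"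

definition components :: "'a set \<Rightarrow> 'a set set \<Rightarrow> 'a set set" where
  "components V E = {C. \<exists>v\<in>V. C = {u\<in>V. reachable V E v u}}"

definition induced_edges :: "'a set set \<Rightarrow> 'a set \<Rightarrow> 'a set set" where
  "induced_edges E S = {e\<in>E. e \<subseteq> S}"

definition articulation :: "'a set \<Rightarrow> 'a set set \<Rightarrow> 'a \<Rightarrow> bool" where
  "articulation V E v \<longleftrightarrow> v \<in> V \<and>
     card (components (V - {v}) (induced_edges E (V - {v}))) > card (components V E)"

definition biconnected :: "'a set \<Rightarrow> 'a set set \<Rightarrow> bool" where
  "biconnected V E \<longleftrightarrow> connected_graph V E \<and> (\<forall>v\<in>V. \<not> articulation V E v)"

definition has_cycle :: "'a set \<Rightarrow> 'a set set \<Rightarrow> bool" where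
  "has_cycle V E \<longleftrightarrow> (\<exists>cs. length cs \<ge> 3 \<and> distinct cs \<and> set cs \<subseteq> V \<and>
     (\<forall>i. Suc i < length cs \<longrightarrow> {cs ! i, cs ! Suc i} \<in> E) \<and> {last cs, hd cs} \<in> E)"

definition is_tree :: "'b set \<Rightarrow> 'b set set \<Rightarrow> bool" where
  "is_tree I F \<longleftrightarrow> wf_graph I F \<and> connected_graph I F \<and> \<not> has_cycle I F"

definition tree_decomp :: "'a set \<Rightarrow> 'a set set \<Rightarrow> nat set \<Rightarrow> nat set set \<Rightarrow> (nat \<Rightarrow> 'a set) \<Rightarrow> bool" where
  "tree_decomp V E I F \<beta> \<longleftrightarrow> is_tree I F \<and> (\<forall>i\<in>I. \<beta> i \<subseteq> V) \<and>
     (\<forall>v\<in>V. \<exists>i\<in>I. v \<in> \<beta> i) \<and> (\<forall>e\<in>E. \<exists>i\<in>I. e \<subseteq> \<beta> i) \<and>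
     (\<forall>v\<in>V. connected_graph {i\<in>I. v \<in> \<beta> i} (induced_edges F {i\<in>I. v \<in> \<beta> i}))"

definition has_tw_le :: "'a set \<Rightarrow> 'a set set \<Rightarrow> nat \<Rightarrow> bool" where
  "has_tw_le V E k \<longleftrightarrow> (\<exists>I F \<beta>. tree_decomp V E I F \<beta> \<and> (\<forall>i\<in>I. card (\<beta> i) \<le> k + 1))"

definition treewidth :: "'a set \<Rightarrow> 'a set set \<Rightarrow> nat" where
  "treewidth V E = (LEAST k. has_tw_le V E k)"

definition del_edges :: "'a set \<Rightarrow> 'a set set \<Rightarrow> 'a set \<Rightarrow> 'a set set" where
  "del_edges V E X = induced_edges E (V - X)"

definition nbhd :: "'a set \<Rightarrow> 'a set set \<Rightarrow> 'a set \<Rightarrow> 'a set" where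
  "nbhd V E S = {v\<in>V - S. \<exists>u\<in>S. {u, v} \<in> E}"

definition closed_nbhd :: "'a set \<Rightarrow> 'a set set \<Rightarrow> 'a set \<Rightarrow> 'a set" where
  "closed_nbhd V E S = S \<union> nbhd V E S"

definition torso_edges :: "'a set \<Rightarrow> 'a set set \<Rightarrow> 'a set \<Rightarrow> 'a set set" where
  "torso_edges V E S = induced_edges E (closed_nbhd V E S) \<union>
     {{u, v} | u v. u \<in> nbhd V E S \<and> v \<in> nbhd V E S \<and> u \<noteq> v}"

definition trivial_instance :: "'a set \<Rightarrow> 'a set set \<Rightarrow> nat \<Rightarrow> bool" where
  "trivial_instance V E t \<longleftrightarrow> card V \<le> 4 \<or> treewidth V E \<le> 2 \<or> t = 0 \<or>
     (\<exists>VH EH. VH \<subseteq> V \<and> EH \<subseteq> E \<and> (\<forall>e\<in>EH. e \<subseteq> VH) \<and> connected_graph VH EH \<and>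
        treewidth (closed_nbhd V E VH) (torso_edges V E VH) \<le> 2)"

definition modulator :: "'a set \<Rightarrow> 'a set set \<Rightarrow> 'a set \<Rightarrow> bool" where
  "modulator V E X \<longleftrightarrow> X \<subseteq> V \<and> treewidth (V - X) (del_edges V E X) \<le> 2"

definition tidy_modulator :: "'a set \<Rightarrow> 'a set set \<Rightarrow> 'a set \<Rightarrow> bool" where
  "tidy_modulator V E X \<longleftrightarrow> modulator V E X \<and>
     (\<forall>x\<in>X. treewidth (V - (X - {x})) (del_edges V E (X - {x})) \<le> 2)"

definition boundary :: "'a set \<Rightarrow> 'a set set \<Rightarrow> 'a set \<Rightarrow> 'a set" where
  "boundary V E U = {u\<in>U. \<exists>w\<in>V - U. {u, w} \<in> E}"

end

theory Submission
  imports Defs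
begin



definition adjR :: "'a set \<Rightarrow> 'a set set \<Rightarrow> 'a \<Rightarrow> 'a \<Rightarrow> bool" where
  "adjR W E x y \<longleftrightarrow> x \<in> W \<and> y \<in> W \<and> {x, y} \<in> E"

lemma reach_def2: "reachable W E u v \<longleftrightarrow> u \<in> W \<and> (adjR W E)\<^sup>*\<^sup>* u v"
proof -
  have "adjR W E = (\<lambda>x y. x \<in> W \<and> y \<in> W \<and> {x, y} \<in> E)" by (auto simp: adjR_def fun_eq_iff)
  then show ?thesis by (simp add: reachable_def)
qed

lemma reach_in2: assumes "reachable W E u v" shows "v \<in> W"
proof -
  have "(adjR W E)\<^sup>*\<^sup>* u v" "u \<in> W" using assms by (auto simp: reach_def2)
  then show ?thesis by (induction rule: rtranclp_induct) (auto simp: adjR_def)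
qed

lemma reach_in1: "reachable W E u v \<Longrightarrow> u \<in> W" by (simp add: reachable_def)

lemma reach_refl: "u \<in> W \<Longrightarrow> reachable W E u u" by (simp add: reachable_def)

lemma reach_edge: "u \<in> W \<Longrightarrow> v \<in> W \<Longrightarrow> {u,v} \<in> E \<Longrightarrow> reachable W E u v"
  by (auto simp: reachable_def)

lemma reach_trans: "reachable W E u v \<Longrightarrow> reachable W E v w \<Longrightarrow> reachable W E u w"
  by (auto simp: reachable_def)

lemma reach_sym: assumes "reachable W E u v" shows "reachable W E v u"
proof -
  have r: "(adjR W E)\<^sup>*\<^sup>* u v" using assms by (auto simp: reach_def2)
  from r have "(adjR W E)\<^sup>*\<^sup>* v u"
  proof (induction rule: rtranclp_induct)
    case base then show ?case by simp
  next
    case (step y z)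
    then have "adjR W E z y" by (auto simp: insert_commute adjR_def)
    then show ?case using step.IH by (meson converse_rtranclp_into_rtranclp)
  qed
  then show ?thesis using reach_in2[OF assms] by (simp add: reach_def2)
qed

lemma reach_mono: assumes "reachable W E u v" "W \<subseteq> W'" "\<And>x y. x \<in> W \<Longrightarrow> y \<in> W \<Longrightarrow> {x,y} \<in> E \<Longrightarrow> {x,y} \<in> E'"
  shows "reachable W' E' u v"
proof -
  have u: "u \<in> W" and r: "(adjR W E)\<^sup>*\<^sup>* u v" using assms by (auto simp: reach_def2)
  from r have "(adjR W' E')\<^sup>*\<^sup>* u v"
  proof (induction rule: rtranclp_induct)
    case base then show ?case by simp
  next
    case (step y z)
    then have "adjR W' E' y z" using assms by (auto simp: adjR_def)
    then show ?case using step.IH by (meson rtranclp.rtrancl_into_rtrancl)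
  qed
  then show ?thesis using u assms by (auto simp: reach_def2)
qed

lemma reach_escape: assumes "reachable W E u v" "u \<in> A" "v \<notin> A"
  shows "\<exists>x y. x \<in> A \<and> x \<in> W \<and> y \<in> W \<and> y \<notin> A \<and> {x,y} \<in> E"
proof -
  have r: "(adjR W E)\<^sup>*\<^sup>* u v" using assms by (auto simp: reach_def2)
  from r assms(3) show ?thesis
  proof (induction rule: rtranclp_induct)
    case base then show ?case using assms by simp
  next
    case (step y z)
    then show ?case by (cases "y \<in> A") (auto simp: adjR_def)
  qed
qed

lemma reach_induced: assumes "W \<subseteq> U" shows "reachable W (induced_edges E U) u v = reachable W E u v"
proof -
  have "(\<lambda>x y. x \<in> W \<and> y \<in> W \<and> {x, y} \<in> induced_edges E U) = (\<lambda>x y. x \<in> W \<and> y \<in> W \<and> {x, y} \<in> E)"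
    using assms by (auto simp: induced_edges_def fun_eq_iff)
  then show ?thesis by (simp add: reachable_def)
qed

lemma conn_induced: "W \<subseteq> U \<Longrightarrow> connected_graph W (induced_edges E U) = connected_graph W E"
  by (simp add: connected_graph_def reach_induced)

lemma conn_union_edge: assumes "connected_graph A E" "connected_graph B E" "x \<in> A" "y \<in> B" "{x,y} \<in> E"
  shows "connected_graph (A \<union> B) E"
proof -
  have rA: "reachable (A \<union> B) E u v" if "u \<in> A" "v \<in> A" for u v
  proof -
    have "reachable A E u v" using assms that unfolding connected_graph_def by blast
    then show ?thesis by (rule reach_mono) auto
  qed
  have rB: "reachable (A \<union> B) E u v" if "u \<in> B" "v \<in> B" for u v
  proof -
    have "reachable B E u v" using assms that unfolding connected_graph_def by blast
    then show ?thesis by (rule reach_mono) auto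
  qed
  have xy: "reachable (A \<union> B) E x y" using assms by (intro reach_edge) auto
  have AB: "reachable (A \<union> B) E u v" if "u \<in> A" "v \<in> B" for u v
    using rA[OF that(1) assms(3)] xy rB[OF assms(4) that(2)] reach_trans by metis
  show ?thesis unfolding connected_graph_def
  proof (intro conjI ballI)
    show "A \<union> B \<noteq> {}" using assms(3) by auto
    fix u v assume "u \<in> A \<union> B" "v \<in> A \<union> B"
    then show "reachable (A \<union> B) E u v"
      using rA[of u v] rB[of u v] AB[of u v] AB[of v u] reach_sym[of "A \<union> B" E v u] by blast
  qed
qed

lemma conn_union_int: assumes "connected_graph A E" "connected_graph B E" "x \<in> A" "x \<in> B"
  shows "connected_graph (A \<union> B) E"
proof -
  have rA: "reachable (A \<union> B) E u v" if "u \<in> A" "v \<in> A" for u v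
  proof -
    have "reachable A E u v" using assms that unfolding connected_graph_def by blast
    then show ?thesis by (rule reach_mono) auto
  qed
  have rB: "reachable (A \<union> B) E u v" if "u \<in> B" "v \<in> B" for u v
  proof -
    have "reachable B E u v" using assms that unfolding connected_graph_def by blast
    then show ?thesis by (rule reach_mono) auto
  qed
  have AB: "reachable (A \<union> B) E u v" if "u \<in> A" "v \<in> B" for u v
    using rA[OF that(1) assms(3)] rB[OF assms(4) that(2)] reach_trans by metis
  show ?thesis unfolding connected_graph_def
  proof (intro conjI ballI)
    show "A \<union> B \<noteq> {}" using assms(3) by auto
    fix u v assume "u \<in> A \<union> B" "v \<in> A \<union> B"
    then show "reachable (A \<union> B) E u v"
      using rA[of u v] rB[of u v] AB[of u v] AB[of v u] reach_sym[of "A \<union> B" E v u] by blast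
  qed
qed

lemma conn_single: "connected_graph {a} E"
  by (auto simp: connected_graph_def reach_refl)

lemma comp_conn: assumes "w \<in> W" shows "connected_graph {z \<in> W. reachable W E w z} E"
proof -
  let ?D = "{z \<in> W. reachable W E w z}"
  have "reachable ?D E w z" if "reachable W E w z" for z
  proof -
    have r: "(adjR W E)\<^sup>*\<^sup>* w z" using that by (auto simp: reach_def2)
    then have "(adjR ?D E)\<^sup>*\<^sup>* w z"
    proof (induction rule: rtranclp_induct)
      case base then show ?case by simp
    next
      case (step y z)
      have "reachable W E w y" using step(1) assms by (simp add: reach_def2)
      moreover then have "reachable W E w z" using step(2) reach_trans reach_edge
        by (metis adjR_def)
      ultimately have "adjR ?D E y z" using step(2) by (auto dest: reach_in2 simp: adjR_def)
      then show ?case using step.IH by (meson rtranclp.rtrancl_into_rtrancl)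
    qed
    then show ?thesis using assms by (auto simp: reach_def2)
  qed
  then have D: "reachable ?D E w z" if "z \<in> ?D" for z using that by auto
  show ?thesis unfolding connected_graph_def
  proof (intro conjI ballI)
    have "w \<in> ?D" using assms reach_refl[of w W E] by simp
    then show "?D \<noteq> {}" by blast
    fix u v assume "u \<in> ?D" "v \<in> ?D"
    then show "reachable ?D E u v" using reach_trans[OF reach_sym[OF D[of u]] D[of v]] by simp
  qed
qed




definition ipath :: "'a set set \<Rightarrow> 'a list \<Rightarrow> bool" where
  "ipath E cs \<longleftrightarrow> (\<forall>i. Suc i < length cs \<longrightarrow> {cs!i, cs!Suc i} \<in> E)"

lemma wf_edge: assumes "wf_graph I F" "{a,b} \<in> F" shows "a \<in> I" "b \<in> I" "a \<noteq> b"
proof -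
  obtain u v where "{a,b} = {u,v}" "u \<noteq> v" "u \<in> I" "v \<in> I" using assms unfolding wf_graph_def by blast
  then show "a \<in> I" "b \<in> I" "a \<noteq> b" by (auto simp: doubleton_eq_iff)
qed

lemma tree_leaf: assumes "is_tree I F" "card I \<ge> 2"
  shows "\<exists>l p. l \<in> I \<and> p \<in> I \<and> p \<noteq> l \<and> {l,p} \<in> F \<and> (\<forall>q. {l,q} \<in> F \<longrightarrow> q = p)"
proof -
  have wf: "wf_graph I F" and con: "connected_graph I F" and nc: "\<not> has_cycle I F"
    using assms(1) by (auto simp: is_tree_def)
  have fin: "finite I" using wf by (simp add: wf_graph_def)
  obtain u v where uv: "u \<in> I" "v \<in> I" "u \<noteq> v"
  proof -
    have "1 < card I" using assms(2) by simp
    then have "\<not> (\<forall>a1\<in>I. \<forall>a2\<in>I. a1 = a2)" using card_le_Suc0_iff_eq[OF fin] by simp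
    then show ?thesis using that by blast
  qed
  have "reachable I F u v" using con uv by (simp add: connected_graph_def)
  then obtain x y where xy: "x \<in> {u}" "y \<in> I" "y \<notin> {u}" "{x,y} \<in> F"
    using reach_escape[of I F u v "{u}"] uv by blast
  define P where "P = (\<lambda>cs. distinct cs \<and> set cs \<subseteq> I \<and> ipath F cs)"
  have P0: "P [u,y]" using xy uv by (auto simp: P_def ipath_def)
  have bnd: "length cs < Suc (card I)" if "P cs" for cs
  proof -
    have "length cs = card (set cs)" using that by (simp add: P_def distinct_card)
    also have "\<dots> \<le> card I" using that fin by (intro card_mono) (auto simp: P_def)
    finally show ?thesis by simp
  qed
  obtain cs where cs: "P cs" and mx: "\<And>ds. P ds \<Longrightarrow> length ds \<le> length cs"
    using ex_has_greatest_nat[of P "[u,y]" length "Suc (card I)"] P0 bnd by blast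
  define n where "n = length cs"
  have n2: "n \<ge> 2" using mx[OF P0] by (simp add: n_def)
  define z where "z = cs ! (n - 1)"
  define p where "p = cs ! (n - 2)"
  have dist: "distinct cs" and sub: "set cs \<subseteq> I" and ip: "ipath F cs" using cs by (auto simp: P_def)
  have zp: "{z,p} \<in> F"
  proof -
    have "{cs ! (n-2), cs ! Suc (n-2)} \<in> F" using ip n2 by (simp add: ipath_def n_def)
    moreover have "Suc (n-2) = n - 1" using n2 by simp
    ultimately show ?thesis by (simp add: z_def p_def insert_commute)
  qed
  have zI: "z \<in> I" and pI: "p \<in> I" using wf_edge[OF wf zp] by auto
  have pz: "p \<noteq> z" using wf_edge[OF wf zp] by auto
  have only: "q = p" if q: "{z,q} \<in> F" for q
  proof (rule ccontr)
    assume qp: "q \<noteq> p"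
    have qI: "q \<in> I" and qz: "z \<noteq> q" using wf_edge[OF wf q] by auto
    show False
    proof (cases "q \<in> set cs")
      case False
      have "P (cs @ [q])"
        unfolding P_def
      proof (intro conjI)
        show "distinct (cs @ [q])" using dist False by simp
        show "set (cs @ [q]) \<subseteq> I" using sub qI by simp
        show "ipath F (cs @ [q])" unfolding ipath_def
        proof (intro allI impI)
          fix i assume i: "Suc i < length (cs @ [q])"
          show "{(cs @ [q]) ! i, (cs @ [q]) ! Suc i} \<in> F"
          proof (cases "Suc i < n")
            case True
            then show ?thesis using ip by (simp add: ipath_def nth_append n_def)
          next
            case False
            then have i1: "i = n - 1" using i by (simp add: n_def)
            have il: "i < length cs" using i1 n2 by (simp add: n_def)
            have "(cs @ [q]) ! i = z" using i1 il by (simp add: nth_append n_def z_def)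
            moreover have "Suc i = length cs" using i1 n2 by (simp add: n_def)
            then have "(cs @ [q]) ! Suc i = q" by simp
            ultimately show ?thesis using q by simp
          qed
        qed
      qed
      then show False using mx[of "cs @ [q]"] by simp
    next
      case True
      then obtain k where k: "k < n" "cs ! k = q" by (auto simp: in_set_conv_nth n_def)
      have "k \<noteq> n - 1" using qz k z_def by auto
      moreover have "k \<noteq> n - 2" using qp k p_def by auto
      ultimately have kl: "k + 3 \<le> n" using k n2 by linarith
      define ds where "ds = drop k cs"
      have "has_cycle I F" unfolding has_cycle_def
      proof (intro exI conjI)
        show "3 \<le> length ds" using kl by (simp add: ds_def n_def)
        show "distinct ds" using dist by (simp add: ds_def)
        show "set ds \<subseteq> I" using sub set_drop_subset[of k cs] by (auto simp: ds_def)
        show "\<forall>i. Suc i < length ds \<longrightarrow> {ds ! i, ds ! Suc i} \<in> F"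
        proof (intro allI impI)
          fix i assume "Suc i < length ds"
          then have "Suc (k + i) < length cs" by (simp add: ds_def)
          then have "{cs ! (k+i), cs ! Suc (k+i)} \<in> F" using ip by (simp add: ipath_def)
          then show "{ds ! i, ds ! Suc i} \<in> F" using kl by (simp add: ds_def n_def)
        qed
        have "last ds = z" using kl by (simp add: ds_def z_def last_conv_nth n_def)
        moreover have "hd ds = q" using kl k by (simp add: ds_def hd_drop_conv_nth n_def)
        ultimately show "{last ds, hd ds} \<in> F" using q by simp
      qed
      then show False using nc by simp
    qed
  qed
  show ?thesis
  proof (rule exI[of _ z], rule exI[of _ p], intro conjI allI impI)
    show "z \<in> I" by (rule zI)
    show "p \<in> I" by (rule pI)
    show "p \<noteq> z" by (rule pz)
    show "{z, p} \<in> F" by (rule zp)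
    fix q assume "{z, q} \<in> F" then show "q = p" by (rule only)
  qed
qed

lemma conn_remove_leaf:
  assumes "connected_graph W E" "l \<in> W" "p \<in> W" "p \<noteq> l" "\<forall>q\<in>W. {l,q} \<in> E \<longrightarrow> q = p"
  shows "connected_graph (W - {l}) E"
  unfolding connected_graph_def
proof (intro conjI ballI)
  show "W - {l} \<noteq> {}" using assms by auto
  fix u v assume u: "u \<in> W - {l}" and v: "v \<in> W - {l}"
  have "(adjR W E)\<^sup>*\<^sup>* u v" using assms(1) u v by (auto simp: connected_graph_def reach_def2)
  have "(w \<noteq> l \<longrightarrow> (adjR (W - {l}) E)\<^sup>*\<^sup>* u w) \<and> (w = l \<longrightarrow> (adjR (W - {l}) E)\<^sup>*\<^sup>* u p)" if "(adjR W E)\<^sup>*\<^sup>* u w" for w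
    using that
  proof (induction rule: rtranclp_induct)
    case base then show ?case using u by auto
  next
    case (step y z)
    have yz: "y \<in> W" "z \<in> W" "{y,z} \<in> E" using step(2) by (auto simp: adjR_def)
    show ?case
    proof (cases "z = l")
      case True
      then show ?thesis
      proof (cases "y = l")
        case True then show ?thesis using step.IH \<open>z = l\<close> by simp
      next
        case False
        then have "y = p" using assms(5) yz \<open>z = l\<close> by (simp add: insert_commute)
        then show ?thesis using step.IH False \<open>z = l\<close> by simp
      qed
    next
      case False
      show ?thesis
      proof (cases "y = l")
        case True
        then have "z = p" using assms(5) yz by simp
        then show ?thesis using step.IH True False by simp
      next
        case yl: False
        have "adjR (W - {l}) E y z" using yz yl False by (simp add: adjR_def)
        then show ?thesis using step.IH yl False by (meson rtranclp.rtrancl_into_rtrancl)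
      qed
    qed
  qed
  then have "(adjR (W - {l}) E)\<^sup>*\<^sup>* u v" using \<open>(adjR W E)\<^sup>*\<^sup>* u v\<close> v by blast
  then show "reachable (W - {l}) E u v" using u by (simp add: reach_def2)
qed




lemma tree_remove_leaf:
  assumes "is_tree I F" "l \<in> I" "p \<in> I" "p \<noteq> l" "\<forall>q. {l,q} \<in> F \<longrightarrow> q = p"
  shows "is_tree (I - {l}) (induced_edges F (I - {l}))"
proof -
  have wf: "wf_graph I F" and con: "connected_graph I F" and nc: "\<not> has_cycle I F"
    using assms(1) by (auto simp: is_tree_def)
  have "wf_graph (I - {l}) (induced_edges F (I - {l}))"
    unfolding wf_graph_def
  proof (intro conjI ballI)
    show "finite (I - {l})" using wf by (simp add: wf_graph_def)
    fix e assume e: "e \<in> induced_edges F (I - {l})"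
    then have "e \<in> F" "e \<subseteq> I - {l}" by (auto simp: induced_edges_def)
    then obtain u v where "e = {u,v}" "u \<noteq> v" using wf unfolding wf_graph_def by blast
    then show "\<exists>u v. e = {u, v} \<and> u \<noteq> v \<and> u \<in> I - {l} \<and> v \<in> I - {l}"
      using \<open>e \<subseteq> I - {l}\<close> by blast
  qed
  moreover have "connected_graph (I - {l}) (induced_edges F (I - {l}))"
    using conn_remove_leaf[OF con assms(2,3,4)] assms(5) by (simp add: conn_induced)
  moreover have "\<not> has_cycle (I - {l}) (induced_edges F (I - {l}))"
  proof
    assume "has_cycle (I - {l}) (induced_edges F (I - {l}))"
    then obtain cs where cs: "length cs \<ge> 3" "distinct cs" "set cs \<subseteq> I - {l}"
      "\<forall>i. Suc i < length cs \<longrightarrow> {cs ! i, cs ! Suc i} \<in> induced_edges F (I - {l})"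
      "{last cs, hd cs} \<in> induced_edges F (I - {l})" unfolding has_cycle_def by blast
    have "has_cycle I F" unfolding has_cycle_def
    proof (rule exI[of _ cs], intro conjI)
      show "set cs \<subseteq> I" using cs(3) by auto
      show "\<forall>i. Suc i < length cs \<longrightarrow> {cs ! i, cs ! Suc i} \<in> F" using cs(4) by (simp add: induced_edges_def)
      show "{last cs, hd cs} \<in> F" using cs(5) by (simp add: induced_edges_def)
    qed (use cs in auto)
    then show False using nc by simp
  qed
  ultimately show ?thesis by (simp add: is_tree_def)
qed

lemma helly:
  assumes "is_tree I F" "finite J" "J \<noteq> {}"
    "\<forall>j\<in>J. T j \<subseteq> I \<and> connected_graph (T j) F"
    "\<forall>j\<in>J. \<forall>k\<in>J. T j \<inter> T k \<noteq> {}"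
  shows "\<exists>i. \<forall>j\<in>J. i \<in> T j"
  using assms
proof (induction "card I" arbitrary: I F T rule: less_induct)
  case less
  have wf: "wf_graph I F" and con: "connected_graph I F"
    using less.prems(1) by (auto simp: is_tree_def)
  have fin: "finite I" using wf by (simp add: wf_graph_def)
  have ne: "T j \<noteq> {}" if "j \<in> J" for j using less.prems(5) that by auto
  show ?case
  proof (cases "card I \<ge> 2")
    case False
    have "I \<noteq> {}" using con by (simp add: connected_graph_def)
    then obtain i0 where "i0 \<in> I" by blast
    have "card I \<le> Suc 0" using False by simp
    then have I1: "I = {i0}" using \<open>i0 \<in> I\<close> card_le_Suc0_iff_eq[OF fin] by auto
    show ?thesis
    proof (rule exI[of _ i0], intro ballI)
      fix j assume "j \<in> J"
      then have "T j \<subseteq> {i0}" "T j \<noteq> {}" using less.prems(4) ne I1 by auto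
      then show "i0 \<in> T j" by auto
    qed
  next
    case True
    obtain l p where lp: "l \<in> I" "p \<in> I" "p \<noteq> l" "{l,p} \<in> F" "\<forall>q. {l,q} \<in> F \<longrightarrow> q = p"
      using tree_leaf[OF less.prems(1) True] by blast
    show ?thesis
    proof (cases "\<exists>j\<in>J. T j = {l}")
      case True
      then obtain j0 where "j0 \<in> J" "T j0 = {l}" by blast
      have "l \<in> T k" if "k \<in> J" for k
      proof -
        have "T j0 \<inter> T k \<noteq> {}" using less.prems(5) \<open>j0 \<in> J\<close> that by simp
        then show ?thesis using \<open>T j0 = {l}\<close> by auto
      qed
      then show ?thesis by blast
    next
      case False
      have key: "p \<in> T j \<and> connected_graph (T j - {l}) F" if j: "j \<in> J" "l \<in> T j" for j
      proof -
        have cj: "connected_graph (T j) F" and sj: "T j \<subseteq> I" using less.prems(4) j by auto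
        obtain v where v: "v \<in> T j" "v \<noteq> l" using False j ne[of j] by blast
        have "reachable (T j) F l v" using cj j v by (simp add: connected_graph_def)
        then obtain x y where xy: "x \<in> {l}" "y \<in> T j" "y \<notin> {l}" "{x,y} \<in> F"
          using reach_escape[of "T j" F l v "{l}"] v by blast
        then have "y = p" using lp by auto
        then have pT: "p \<in> T j" using xy by simp
        have "connected_graph (T j - {l}) F"
          using conn_remove_leaf[OF cj j(2) pT lp(3)] lp(5) by blast
        then show ?thesis using pT by simp
      qed
      define T' where "T' = (\<lambda>j. T j - {l})"
      have tree': "is_tree (I - {l}) (induced_edges F (I - {l}))"
        using tree_remove_leaf[OF less.prems(1) lp(1,2,3,5)] .
      have card': "card (I - {l}) < card I" by (rule card_Diff1_less[OF fin lp(1)])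
      have "\<forall>j\<in>J. T' j \<subseteq> I - {l} \<and> connected_graph (T' j) (induced_edges F (I - {l}))"
      proof
        fix j assume j: "j \<in> J"
        have sub: "T' j \<subseteq> I - {l}" using less.prems(4) j by (auto simp: T'_def)
        have "connected_graph (T' j) F"
        proof (cases "l \<in> T j")
          case True then show ?thesis using key[OF j True] by (simp add: T'_def)
        next
          case False then have "T' j = T j" by (auto simp: T'_def)
          then show ?thesis using less.prems(4) j by simp
        qed
        then show "T' j \<subseteq> I - {l} \<and> connected_graph (T' j) (induced_edges F (I - {l}))"
          using sub by (simp add: conn_induced)
      qed
      moreover have "\<forall>j\<in>J. \<forall>k\<in>J. T' j \<inter> T' k \<noteq> {}"
      proof (intro ballI)
        fix j k assume jk: "j \<in> J" "k \<in> J"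
        show "T' j \<inter> T' k \<noteq> {}"
        proof (cases "\<exists>x. x \<in> T j \<inter> T k \<and> x \<noteq> l")
          case True then show ?thesis by (auto simp: T'_def)
        next
          case False
          then have "l \<in> T j" "l \<in> T k" using less.prems(5) jk by blast+
          then have "p \<in> T j" "p \<in> T k" using key jk by blast+
          then have "p \<in> T' j \<inter> T' k" using lp(3) by (simp add: T'_def)
          then show ?thesis by blast
        qed
      qed
      ultimately obtain i where "\<forall>j\<in>J. i \<in> T' j"
        using less.hyps[OF card' tree' less.prems(2,3)] by blast
      then show ?thesis by (auto simp: T'_def)
    qed
  qed
qed




lemma reach_mono_set: "reachable W E u v \<Longrightarrow> W \<subseteq> W' \<Longrightarrow> reachable W' E u v"
  by (rule reach_mono) auto

lemma tw_conn:
  assumes td: "tree_decomp V E I F \<beta>" and WV: "W \<subseteq> V" and cW: "connected_graph W E"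
  shows "connected_graph {i\<in>I. \<beta> i \<inter> W \<noteq> {}} F"
proof -
  define TW where "TW = {i\<in>I. \<beta> i \<inter> W \<noteq> {}}"
  define T where "T = (\<lambda>w. {i\<in>I. w \<in> \<beta> i})"
  have Tc: "connected_graph (T w) F" if "w \<in> W" for w
  proof -
    have "connected_graph (T w) (induced_edges F (T w))"
      using td WV that unfolding tree_decomp_def T_def by blast
    then show ?thesis by (simp add: conn_induced)
  qed
  have TsubW: "T w \<subseteq> TW" if "w \<in> W" for w using that by (auto simp: T_def TW_def)
  have claim: "\<forall>i\<in>T w. reachable TW F i0 i" if w0: "w0 \<in> W" and i0: "i0 \<in> T w0" and r: "(adjR W E)\<^sup>*\<^sup>* w0 w" for w0 i0 w
    using r
  proof (induction rule: rtranclp_induct)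
    case base
    show ?case
    proof
      fix i assume "i \<in> T w0"
      then have "reachable (T w0) F i0 i" using Tc[OF w0] i0 by (simp add: connected_graph_def)
      then show "reachable TW F i0 i" using TsubW[OF w0] by (rule reach_mono_set)
    qed
  next
    case (step y z)
    have yz: "y \<in> W" "z \<in> W" "{y,z} \<in> E" using step(2) by (auto simp: adjR_def)
    obtain j where j: "j \<in> I" "{y,z} \<subseteq> \<beta> j" using td yz(3) unfolding tree_decomp_def by blast
    have jy: "j \<in> T y" and jz: "j \<in> T z" using j by (auto simp: T_def)
    have r0: "reachable TW F i0 j" using step.IH jy by blast
    show ?case
    proof
      fix i assume "i \<in> T z"
      then have "reachable (T z) F j i" using Tc[OF yz(2)] jz by (simp add: connected_graph_def)
      then have "reachable TW F j i" using TsubW[OF yz(2)] by (rule reach_mono_set)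
      then show "reachable TW F i0 i" using r0 reach_trans by metis
    qed
  qed
  show ?thesis
    unfolding TW_def[symmetric] connected_graph_def
  proof (intro conjI ballI)
    obtain w where w: "w \<in> W" using cW by (auto simp: connected_graph_def)
    then obtain i where "i \<in> I" "w \<in> \<beta> i" using td WV unfolding tree_decomp_def by blast
    then have "i \<in> TW" using w by (auto simp: TW_def)
    then show "TW \<noteq> {}" by auto
  next
    fix i i' assume i: "i \<in> TW" and i': "i' \<in> TW"
    obtain w where w: "w \<in> W" "w \<in> \<beta> i" using i by (auto simp: TW_def)
    obtain w' where w': "w' \<in> W" "w' \<in> \<beta> i'" using i' by (auto simp: TW_def)
    have "reachable W E w w'" using cW w w' by (simp add: connected_graph_def)
    then have "(adjR W E)\<^sup>*\<^sup>* w w'" by (simp add: reach_def2)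
    moreover have "i \<in> T w" "i' \<in> T w'" using i i' w w' by (auto simp: TW_def T_def)
    ultimately show "reachable TW F i i'" using claim[OF w(1)] by blast
  qed
qed

lemma no_K4:
  fixes M :: "nat \<Rightarrow> 'a set"
  assumes td: "tree_decomp V E I F \<beta>" and wd: "\<forall>i\<in>I. card (\<beta> i) \<le> 3" and fV: "finite V"
    and M: "\<forall>j<4. M j \<subseteq> V \<and> M j \<noteq> {} \<and> connected_graph (M j) E"
    and dj: "\<forall>j<4. \<forall>k<4. j \<noteq> k \<longrightarrow> M j \<inter> M k = {}"
    and adj: "\<forall>j<4. \<forall>k<4. j \<noteq> k \<longrightarrow> (\<exists>x\<in>M j. \<exists>y\<in>M k. {x,y} \<in> E)"
  shows False
proof -
  have tree: "is_tree I F" using td by (simp add: tree_decomp_def)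
  define T where "T = (\<lambda>j::nat. {i\<in>I. \<beta> i \<inter> M j \<noteq> {}})"
  have "\<forall>j\<in>{..<4}. T j \<subseteq> I \<and> connected_graph (T j) F"
    using tw_conn[OF td] M by (auto simp: T_def)
  moreover have "\<forall>j\<in>{..<4}. \<forall>k\<in>{..<4}. T j \<inter> T k \<noteq> {}"
  proof (intro ballI)
    fix j k assume j: "j \<in> {..<4::nat}" and k: "k \<in> {..<4::nat}"
    show "T j \<inter> T k \<noteq> {}"
    proof (cases "j = k")
      case True
      obtain w where w: "w \<in> M j" using M j by blast
      then have "w \<in> V" using M j by blast
      then obtain i where "i \<in> I" "w \<in> \<beta> i" using td unfolding tree_decomp_def by blast
      then have "i \<in> T j" using w by (auto simp: T_def)
      then show ?thesis using True by blast
    next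
      case False
      obtain x y where xy: "x \<in> M j" "y \<in> M k" "{x,y} \<in> E" using adj j k False by blast
      then obtain i where "i \<in> I" "{x,y} \<subseteq> \<beta> i" using td unfolding tree_decomp_def by blast
      then have "i \<in> T j \<inter> T k" using xy by (auto simp: T_def)
      then show ?thesis by blast
    qed
  qed
  moreover have ne4: "{..<4::nat} \<noteq> {}" by (simp add: lessThan_empty_iff)
  ultimately obtain i where i: "\<forall>j\<in>{..<4}. i \<in> T j"
    using helly[OF tree finite_lessThan ne4, of T] by blast
  then have "i \<in> T 0" by simp
  then have iI: "i \<in> I" by (simp add: T_def)
  define f where "f = (\<lambda>j. SOME x. x \<in> \<beta> i \<inter> M j)"
  have f: "f j \<in> \<beta> i \<inter> M j" if "j < 4" for j
  proof -
    have "\<beta> i \<inter> M j \<noteq> {}" using i that by (auto simp: T_def)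
    then show ?thesis unfolding f_def by (meson ex_in_conv someI_ex)
  qed
  have inj: "inj_on f {..<4}"
  proof (rule inj_onI)
    fix j k assume j: "j \<in> {..<4::nat}" and k: "k \<in> {..<4::nat}" and e: "f j = f k"
    show "j = k"
    proof (rule ccontr)
      assume "j \<noteq> k"
      then have "M j \<inter> M k = {}" using dj j k by auto
      moreover have "f j \<in> M j" "f k \<in> M k" using f j k by auto
      ultimately show False using e by auto
    qed
  qed
  have "f ` {..<4} \<subseteq> \<beta> i" using f by auto
  moreover have "finite (\<beta> i)" using td iI fV unfolding tree_decomp_def by (meson finite_subset)
  ultimately have "card (f ` {..<4}) \<le> card (\<beta> i)" by (rule card_mono[rotated])
  moreover have "card (f ` {..<4}) = 4" using card_image[OF inj] by simp
  ultimately show False using wd iI by fastforce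
qed




lemma less4: "(j::nat) < 4 \<Longrightarrow> j = 0 \<or> j = 1 \<or> j = 2 \<or> j = 3" by arith

lemma no_K4_4:
  fixes A1 A2 A3 A4 :: "'a set"
  assumes td: "tree_decomp V E I F \<beta>" and wd: "\<forall>i\<in>I. card (\<beta> i) \<le> 3" and fV: "finite V"
    and M: "A1 \<subseteq> V" "A1 \<noteq> {}" "connected_graph A1 E"
       "A2 \<subseteq> V" "A2 \<noteq> {}" "connected_graph A2 E"
       "A3 \<subseteq> V" "A3 \<noteq> {}" "connected_graph A3 E"
       "A4 \<subseteq> V" "A4 \<noteq> {}" "connected_graph A4 E"
    and dj: "A1 \<inter> A2 = {}" "A1 \<inter> A3 = {}" "A1 \<inter> A4 = {}" "A2 \<inter> A3 = {}" "A2 \<inter> A4 = {}" "A3 \<inter> A4 = {}"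
    and adj: "\<exists>x\<in>A1. \<exists>y\<in>A2. {x,y} \<in> E" "\<exists>x\<in>A1. \<exists>y\<in>A3. {x,y} \<in> E" "\<exists>x\<in>A1. \<exists>y\<in>A4. {x,y} \<in> E"
      "\<exists>x\<in>A2. \<exists>y\<in>A3. {x,y} \<in> E" "\<exists>x\<in>A2. \<exists>y\<in>A4. {x,y} \<in> E" "\<exists>x\<in>A3. \<exists>y\<in>A4. {x,y} \<in> E"
  shows False
proof -
  define M where "M = (\<lambda>j. [A1,A2,A3,A4] ! j)"
  have sw: "\<exists>x\<in>B. \<exists>y\<in>A. {x,y} \<in> E" if "\<exists>x\<in>A. \<exists>y\<in>B. {x,y} \<in> E" for A B
    using that by (metis insert_commute)
  show False
  proof (rule no_K4[OF td wd fV, of M])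
    show "\<forall>j<4. M j \<subseteq> V \<and> M j \<noteq> {} \<and> connected_graph (M j) E"
      using M by (auto dest!: less4 simp: M_def)
    show "\<forall>j<4. \<forall>k<4. j \<noteq> k \<longrightarrow> M j \<inter> M k = {}"
      using dj by (auto dest!: less4 simp: M_def)
    show "\<forall>j<4. \<forall>k<4. j \<noteq> k \<longrightarrow> (\<exists>x\<in>M j. \<exists>y\<in>M k. {x, y} \<in> E)"
    proof (intro allI impI)
      fix j k :: nat assume "j < 4" "k < 4" "j \<noteq> k"
      then have jk: "j = 0 \<or> j = 1 \<or> j = 2 \<or> j = 3" "k = 0 \<or> k = 1 \<or> k = 2 \<or> k = 3" "j \<noteq> k"
        using less4 by blast+
      note adjs = adj sw[OF adj(1)] sw[OF adj(2)] sw[OF adj(3)] sw[OF adj(4)] sw[OF adj(5)] sw[OF adj(6)]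
      from jk show "\<exists>x\<in>M j. \<exists>y\<in>M k. {x, y} \<in> E"
        by (elim disjE; simp add: M_def adjs)
    qed
  qed
qed

lemma reach_path:
  assumes "reachable W E u v"
  shows "\<exists>P. P \<noteq> [] \<and> distinct P \<and> hd P = u \<and> last P = v \<and> set P \<subseteq> W \<and> ipath E P"
proof -
  have u: "u \<in> W" and r: "(adjR W E)\<^sup>*\<^sup>* u v" using assms by (auto simp: reach_def2)
  from r show ?thesis
  proof (induction rule: rtranclp_induct)
    case base
    show ?case by (rule exI[of _ "[u]"]) (use u in \<open>auto simp: ipath_def\<close>)
  next
    case (step y z)
    obtain P where P: "P \<noteq> []" "distinct P" "hd P = u" "last P = y" "set P \<subseteq> W" "ipath E P"
      using step.IH by blast
    have yz: "y \<in> W" "z \<in> W" "{y,z} \<in> E" using step(2) by (auto simp: adjR_def)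
    show ?case
    proof (cases "z \<in> set P")
      case True
      then obtain k where k: "k < length P" "P ! k = z" by (auto simp: in_set_conv_nth)
      define Q where "Q = take (Suc k) P"
      show ?thesis
      proof (rule exI[of _ Q], intro conjI)
        show "Q \<noteq> []" using P k by (simp add: Q_def)
        show "distinct Q" using P by (simp add: Q_def)
        show "hd Q = u" using P by (simp add: Q_def)
        show "last Q = z" using k by (simp add: Q_def take_Suc_conv_app_nth)
        show "set Q \<subseteq> W" using P set_take_subset[of "Suc k" P] by (auto simp: Q_def)
        show "ipath E Q" using P(6) by (auto simp: Q_def ipath_def)
      qed
    next
      case False
      show ?thesis
      proof (rule exI[of _ "P @ [z]"], intro conjI)
        show "ipath E (P @ [z])" unfolding ipath_def
        proof (intro allI impI)
          fix i assume i: "Suc i < length (P @ [z])"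
          show "{(P @ [z]) ! i, (P @ [z]) ! Suc i} \<in> E"
          proof (cases "Suc i < length P")
            case True then show ?thesis using P(6) by (simp add: ipath_def nth_append)
          next
            case False
            then have il: "i < length P" "Suc i = length P" using i by auto
            have "i = length P - 1" using il by simp
            then have "(P @ [z]) ! i = y" using il P(1,4) by (simp add: nth_append last_conv_nth)
            moreover have "(P @ [z]) ! Suc i = z" using il by simp
            ultimately show ?thesis using yz by simp
          qed
        qed
      qed (use P False yz in auto)
    qed
  qed
qed

lemma path_conn:
  assumes "P \<noteq> []" "ipath E P"
  shows "connected_graph (set P) E"
proof -
  have r: "reachable (set P) E (P ! 0) (P ! i)" if "i < length P" for i
    using that
  proof (induction i)
    case 0 then show ?case using assms by (simp add: reach_refl)
  next
    case (Suc i)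
    then have "{P ! i, P ! Suc i} \<in> E" using assms by (simp add: ipath_def)
    then have "reachable (set P) E (P ! i) (P ! Suc i)" using Suc.prems by (intro reach_edge) auto
    then show ?case using Suc reach_trans by (metis Suc_lessD)
  qed
  show ?thesis unfolding connected_graph_def
  proof (intro conjI ballI)
    show "set P \<noteq> {}" using assms by simp
    fix u v assume "u \<in> set P" "v \<in> set P"
    then obtain i j where "i < length P" "P ! i = u" "j < length P" "P ! j = v" by (auto simp: in_set_conv_nth)
    then show "reachable (set P) E u v" using r reach_sym reach_trans by metis
  qed
qed

lemma ipath_take: "ipath E P \<Longrightarrow> ipath E (take n P)" by (auto simp: ipath_def)
lemma ipath_drop: "ipath E P \<Longrightarrow> ipath E (drop n P)" by (auto simp: ipath_def)

lemma conn_EH: assumes "connected_graph M E" "M \<subseteq> VH" "\<forall>e\<in>E. e \<subseteq> VH \<longrightarrow> e \<in> EH"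
  shows "connected_graph M EH"
  unfolding connected_graph_def
proof (intro conjI ballI)
  show "M \<noteq> {}" using assms(1) by (simp add: connected_graph_def)
  fix u v assume "u \<in> M" "v \<in> M"
  then have "reachable M E u v" using assms(1) by (simp add: connected_graph_def)
  then show "reachable M EH u v" by (rule reach_mono) (use assms(2,3) in auto)
qed




lemma adjEH: assumes "\<exists>x\<in>A. \<exists>y\<in>B. {x,y} \<in> E" "A \<subseteq> VH" "B \<subseteq> VH" "\<forall>e\<in>E. e \<subseteq> VH \<longrightarrow> e \<in> EH"
  shows "\<exists>x\<in>A. \<exists>y\<in>B. {x,y} \<in> EH"
proof -
  obtain x y where "x \<in> A" "y \<in> B" "{x,y} \<in> E" using assms(1) by blast
  moreover then have "{x,y} \<subseteq> VH" using assms(2,3) by auto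
  ultimately show ?thesis using assms(4) by blast
qed

lemma no_three_attach:
  assumes td: "tree_decomp VH EH I F \<beta>" and wd: "\<forall>i\<in>I. card (\<beta> i) \<le> 3" and fV: "finite VH"
    and EH: "\<forall>e\<in>E. e \<subseteq> VH \<longrightarrow> e \<in> EH"
    and SV: "S \<subseteq> VH" and ZV: "Z \<subseteq> VH" and ZS: "Z \<inter> S = {}" and cZ: "connected_graph Z E"
    and cS: "connected_graph S E" and cS2: "\<forall>c\<in>S. S - {c} \<noteq> {} \<longrightarrow> connected_graph (S - {c}) E"
    and abc: "a \<in> S" "b \<in> S" "c \<in> S" "a \<noteq> b" "a \<noteq> c" "b \<noteq> c"
    and att: "\<exists>z\<in>Z. {a,z} \<in> E" "\<exists>z\<in>Z. {b,z} \<in> E" "\<exists>z\<in>Z. {c,z} \<in> E"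
  shows False
proof -
  have "a \<in> S - {c}" using abc by simp
  then have cSc: "connected_graph (S - {c}) E" using cS2 abc(3) by blast
  have rab: "reachable (S - {c}) E a b" using cSc abc by (simp add: connected_graph_def)
  obtain P where P: "P \<noteq> []" "distinct P" "hd P = a" "last P = b" "set P \<subseteq> S - {c}" "ipath E P"
    using reach_path[OF rab] by (elim exE conjE) (rule that)
  define W where "W = S - set P"
  define C0 where "C0 = {u \<in> W. reachable W E c u}"
  have cW: "c \<in> W" using abc P(5) by (auto simp: W_def)
  have cC0: "c \<in> C0" using cW reach_refl[OF cW] by (simp add: C0_def)
  have C0W: "C0 \<subseteq> W" by (auto simp: C0_def)
  have clos: "u \<in> C0" if "y \<in> C0" "u \<in> W" "{y,u} \<in> E" for y u
  proof -
    have "reachable W E c y" "y \<in> W" using that(1) by (auto simp: C0_def)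
    then have "reachable W E c u" using reach_trans reach_edge that(2,3) by metis
    then show ?thesis using that(2) by (simp add: C0_def)
  qed
  define N0 where "N0 = {k. k < length P \<and> (\<exists>y\<in>C0. {P ! k, y} \<in> E)}"
  have esc: "\<exists>k\<in>N0. P ! k \<in> S'" if hyp: "S' \<subseteq> S" "reachable S' E c q" "q \<in> set P" for S' q
  proof -
    have "q \<notin> C0" using hyp(3) C0W by (auto simp: W_def)
    then obtain x y where xy: "x \<in> C0" "x \<in> S'" "y \<in> S'" "y \<notin> C0" "{x,y} \<in> E"
      using reach_escape[OF hyp(2) cC0] by blast
    have "y \<in> set P"
    proof (rule ccontr)
      assume "y \<notin> set P"
      then have "y \<in> W" using xy hyp(1) by (auto simp: W_def)
      then show False using clos[OF xy(1) _ xy(5)] xy(4) by blast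
    qed
    then obtain k where k: "k < length P" "P ! k = y" by (auto simp: in_set_conv_nth)
    have "{P ! k, x} \<in> E" using xy(5) k(2) by (simp add: insert_commute)
    then have "k \<in> N0" using k xy(1) by (auto simp: N0_def)
    then show ?thesis using k xy(3) by blast
  qed
  have "a \<in> set P" using P(1,3) hd_in_set by metis
  have "b \<in> set P" using P(1,4) last_in_set by metis
  have "reachable S E c a" using cS abc by (simp add: connected_graph_def)
  then obtain k0 where k0: "k0 \<in> N0" using esc[of S a] \<open>a \<in> set P\<close> by blast
  define p where "p = P ! k0"
  have k0l: "k0 < length P" using k0 by (simp add: N0_def)
  then have "p \<in> set P" unfolding p_def by (rule nth_mem)
  then have "p \<noteq> c" using P(5) by blast
  then have "c \<in> S - {p}" using abc by simp
  moreover have "p \<in> S" using \<open>p \<in> set P\<close> P(5) by blast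
  ultimately have cSp: "connected_graph (S - {p}) E" using cS2 by blast
  define q where "q = (if a = p then b else a)"
  have q: "q \<in> set P" "q \<noteq> p" "q \<in> S" using \<open>a \<in> set P\<close> \<open>b \<in> set P\<close> abc by (auto simp: q_def)
  have "reachable (S - {p}) E c q" using cSp \<open>c \<in> S - {p}\<close> q by (simp add: connected_graph_def)
  then obtain k1 where k1: "k1 \<in> N0" "P ! k1 \<in> S - {p}" using esc[of "S - {p}" q] q(1) by blast
  have "k1 \<noteq> k0" using k1 by (auto simp: p_def)
  define i where "i = min k0 k1"
  define j where "j = max k0 k1"
  have ij: "i < j" "i \<in> N0" "j \<in> N0" using \<open>k1 \<noteq> k0\<close> k0 k1 by (auto simp: i_def j_def min_def max_def)
  have jl: "j < length P" using ij by (simp add: N0_def)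
  define A1 where "A1 = set (take (Suc i) P)"
  define A2 where "A2 = set (drop (Suc i) P)"
  have PS: "set P \<subseteq> S" using P(5) by auto
  have A1P: "A1 \<subseteq> set P" by (simp add: A1_def set_take_subset)
  have A2P: "A2 \<subseteq> set P" by (simp add: A2_def set_drop_subset)
  have tk: "take (Suc i) P = take i P @ [P ! i]" using ij jl by (simp add: take_Suc_conv_app_nth)
  have dr: "drop (Suc i) P \<noteq> []" using ij jl by simp
  have aA1: "a \<in> A1"
  proof -
    have "take (Suc i) P \<noteq> []" using P(1) by simp
    then have "hd (take (Suc i) P) \<in> A1" unfolding A1_def by (rule hd_in_set)
    then show ?thesis using P(3) by simp
  qed
  have bA2: "b \<in> A2" using dr P(4) last_in_set[OF dr] ij jl by (simp add: A2_def)
  have piA1: "P ! i \<in> A1" using tk by (simp add: A1_def)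
  have pjA2: "P ! j \<in> A2"
  proof -
    have "drop (Suc i) P ! (j - Suc i) = P ! j" using ij jl by simp
    moreover have "j - Suc i < length (drop (Suc i) P)" using ij jl by simp
    ultimately show ?thesis unfolding A2_def by (metis nth_mem)
  qed
  have psA2: "P ! Suc i \<in> A2"
  proof -
    have "drop (Suc i) P ! 0 = P ! Suc i" using ij jl by simp
    then show ?thesis unfolding A2_def using dr by (metis nth_mem length_greater_0_conv)
  qed
  have e01: "{P ! i, P ! Suc i} \<in> E" using P(6) ij jl by (simp add: ipath_def)
  obtain y2 where y2: "y2 \<in> C0" "{P ! i, y2} \<in> E" using ij by (auto simp: N0_def)
  obtain y3 where y3: "y3 \<in> C0" "{P ! j, y3} \<in> E" using ij by (auto simp: N0_def)
  have C0S: "C0 \<subseteq> S" using C0W by (auto simp: W_def)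
  have C0P: "C0 \<inter> set P = {}" using C0W by (auto simp: W_def)
  have cA1: "connected_graph A1 E" unfolding A1_def
    by (rule path_conn) (use P in \<open>simp_all add: ipath_take\<close>)
  have cA2: "connected_graph A2 E" unfolding A2_def
    by (rule path_conn) (use P dr in \<open>simp_all add: ipath_drop\<close>)
  have cC0': "connected_graph C0 E" unfolding C0_def by (rule comp_conn[OF cW])
  show False
  proof (rule no_K4_4[OF td wd fV, of A1 A2 C0 Z])
    show "A1 \<subseteq> VH" "A2 \<subseteq> VH" "C0 \<subseteq> VH" "Z \<subseteq> VH" using A1P A2P PS C0S SV ZV by auto
    show "A1 \<noteq> {}" using aA1 by blast
    show "A2 \<noteq> {}" using bA2 by blast
    show "C0 \<noteq> {}" using cC0 by blast
    show "Z \<noteq> {}" using att(1) by blast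
    show "connected_graph A1 EH" using conn_EH[OF cA1 _ EH] A1P PS SV by auto
    show "connected_graph A2 EH" using conn_EH[OF cA2 _ EH] A2P PS SV by auto
    show "connected_graph C0 EH" using conn_EH[OF cC0' _ EH] C0S SV by auto
    show "connected_graph Z EH" using conn_EH[OF cZ ZV EH] .
    show "A1 \<inter> A2 = {}" unfolding A1_def A2_def by (rule set_take_disj_set_drop_if_distinct[OF P(2)]) simp
    show "A1 \<inter> C0 = {}" using A1P C0P by blast
    show "A1 \<inter> Z = {}" using A1P PS ZS by blast
    show "A2 \<inter> C0 = {}" using A2P C0P by blast
    show "A2 \<inter> Z = {}" using A2P PS ZS by blast
    show "C0 \<inter> Z = {}" using C0S ZS by blast
    have V1: "A1 \<subseteq> VH" "A2 \<subseteq> VH" "C0 \<subseteq> VH" using A1P A2P PS C0S SV by auto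
    show "\<exists>x\<in>A1. \<exists>y\<in>A2. {x, y} \<in> EH" using adjEH[OF _ V1(1,2) EH] piA1 psA2 e01 by blast
    show "\<exists>x\<in>A1. \<exists>y\<in>C0. {x, y} \<in> EH" using adjEH[OF _ V1(1,3) EH] piA1 y2 by blast
    show "\<exists>x\<in>A1. \<exists>y\<in>Z. {x, y} \<in> EH" using adjEH[OF _ V1(1) ZV EH] aA1 att(1) by blast
    show "\<exists>x\<in>A2. \<exists>y\<in>C0. {x, y} \<in> EH" using adjEH[OF _ V1(2,3) EH] pjA2 y3 by blast
    show "\<exists>x\<in>A2. \<exists>y\<in>Z. {x, y} \<in> EH" using adjEH[OF _ V1(2) ZV EH] bA2 att(2) by blast
    show "\<exists>x\<in>C0. \<exists>y\<in>Z. {x, y} \<in> EH" using adjEH[OF _ V1(3) ZV EH] cC0 att(3) by blast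
  qed
qed




lemma trivial_has_tw:
  assumes "finite V" "\<forall>e\<in>E. e \<subseteq> V"
  shows "has_tw_le V E (card V)"
proof -
  have nc: "\<not> has_cycle {0::nat} {}"
  proof
    assume "has_cycle {0::nat} {}"
    then obtain cs :: "nat list" where "length cs \<ge> 3" "distinct cs" "set cs \<subseteq> {0}" unfolding has_cycle_def by blast
    moreover then have "length cs = card (set cs)" by (simp add: distinct_card)
    moreover have "card (set cs) \<le> card {0::nat}" using \<open>set cs \<subseteq> {0}\<close> by (intro card_mono) auto
    ultimately show False by simp
  qed
  have tree: "is_tree {0::nat} {}"
    unfolding is_tree_def wf_graph_def using nc conn_single by auto
  have "tree_decomp V E {0} {} (\<lambda>_. V)"
    unfolding tree_decomp_def
  proof (intro conjI ballI)
    show "is_tree {0::nat} {}" by (rule tree)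
    fix v assume "v \<in> V"
    then have "{i \<in> {0::nat}. v \<in> V} = {0}" by auto
    then show "connected_graph {i \<in> {0::nat}. v \<in> V} (induced_edges {} {i \<in> {0}. v \<in> V})"
      by (simp add: conn_single)
  qed (use assms in auto)
  then show ?thesis unfolding has_tw_le_def by fastforce
qed

lemma tw_decomp:
  assumes "finite V" "\<forall>e\<in>E. e \<subseteq> V" "treewidth V E \<le> 2"
  shows "\<exists>I F \<beta>. tree_decomp V E I F \<beta> \<and> (\<forall>i\<in>I. card (\<beta> i) \<le> 3)"
proof -
  have "has_tw_le V E (card V)" by (rule trivial_has_tw[OF assms(1,2)])
  then have "has_tw_le V E (treewidth V E)" unfolding treewidth_def by (rule LeastI)
  then obtain I F \<beta> where "tree_decomp V E I F \<beta>" "\<forall>i\<in>I. card (\<beta> i) \<le> treewidth V E + 1"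
    unfolding has_tw_le_def by blast
  then show ?thesis using assms(3) by force
qed

lemma tw_le2: "has_tw_le V E 2 \<Longrightarrow> treewidth V E \<le> 2"
  unfolding treewidth_def by (rule Least_le)

lemma contract_td:
  assumes td: "tree_decomp V1 E1 I F \<beta>" and wd: "\<forall>i\<in>I. card (\<beta> i) \<le> 3" and fV: "finite V1"
    and K: "K \<subseteq> V1" "a \<in> K" "connected_graph K E1"
    and U: "U \<subseteq> V1" "a \<in> U" "U \<inter> K = {a}"
    and E2: "\<forall>e\<in>E2. (e \<subseteq> U \<and> e \<in> E1) \<or> (\<exists>v\<in>U. e = {a,v} \<and> (\<exists>k\<in>K. {k,v} \<in> E1))"
  shows "has_tw_le U E2 2"
proof -
  define \<beta>' where "\<beta>' = (\<lambda>i. (\<beta> i \<inter> U) \<union> (if \<beta> i \<inter> K \<noteq> {} then {a} else {}))"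
  have tree: "is_tree I F" using td by (simp add: tree_decomp_def)
  have bagV: "\<beta> i \<subseteq> V1" if "i \<in> I" for i using td that by (simp add: tree_decomp_def)
  have cover: "\<exists>i\<in>I. v \<in> \<beta> i" if "v \<in> V1" for v using td that by (simp add: tree_decomp_def)
  have ecover: "\<exists>i\<in>I. e \<subseteq> \<beta> i" if "e \<in> E1" for e using td that by (simp add: tree_decomp_def)
  have vconn: "connected_graph {i\<in>I. v \<in> \<beta> i} F" if "v \<in> V1" for v
  proof -
    have "connected_graph {i\<in>I. v \<in> \<beta> i} (induced_edges F {i\<in>I. v \<in> \<beta> i})"
      using td that by (simp add: tree_decomp_def)
    then show ?thesis by (simp add: conn_induced)
  qed
  have "tree_decomp U E2 I F \<beta>'"
    unfolding tree_decomp_def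
  proof (intro conjI ballI)
    show "is_tree I F" by (rule tree)
    fix i assume "i \<in> I" then show "\<beta>' i \<subseteq> U" using U(2) by (auto simp: \<beta>'_def)
  next
    fix v assume v: "v \<in> U"
    then obtain i where "i \<in> I" "v \<in> \<beta> i" using cover U(1) by blast
    then show "\<exists>i\<in>I. v \<in> \<beta>' i" using v by (auto simp: \<beta>'_def)
  next
    fix e assume e: "e \<in> E2"
    show "\<exists>i\<in>I. e \<subseteq> \<beta>' i"
    proof (cases "e \<subseteq> U \<and> e \<in> E1")
      case True
      then obtain i where "i \<in> I" "e \<subseteq> \<beta> i" using ecover by blast
      then show ?thesis using True by (auto simp: \<beta>'_def)
    next
      case False
      then obtain v k where vk: "v \<in> U" "e = {a,v}" "k \<in> K" "{k,v} \<in> E1" using E2 e by blast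
      then obtain i where i: "i \<in> I" "{k,v} \<subseteq> \<beta> i" using ecover by blast
      then have "\<beta> i \<inter> K \<noteq> {}" using vk by auto
      then have "e \<subseteq> \<beta>' i" using i vk by (auto simp: \<beta>'_def)
      then show ?thesis using i by blast
    qed
  next
    fix v assume v: "v \<in> U"
    show "connected_graph {i \<in> I. v \<in> \<beta>' i} (induced_edges F {i \<in> I. v \<in> \<beta>' i})"
    proof (cases "v = a")
      case True
      have "{i \<in> I. v \<in> \<beta>' i} = {i \<in> I. \<beta> i \<inter> K \<noteq> {}}" using True K(2) by (auto simp: \<beta>'_def)
      moreover have "connected_graph {i \<in> I. \<beta> i \<inter> K \<noteq> {}} F" by (rule tw_conn[OF td K(1) K(3)])
      ultimately show ?thesis by (simp add: conn_induced)
    next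
      case False
      have "{i \<in> I. v \<in> \<beta>' i} = {i \<in> I. v \<in> \<beta> i}" using False v by (auto simp: \<beta>'_def)
      moreover have "connected_graph {i \<in> I. v \<in> \<beta> i} F" using vconn v U(1) by blast
      ultimately show ?thesis by (simp add: conn_induced)
    qed
  qed
  moreover have "card (\<beta>' i) \<le> 2 + 1" if i: "i \<in> I" for i
  proof -
    define \<phi> where "\<phi> = (\<lambda>v. if v \<in> K then a else v)"
    have "\<beta>' i \<subseteq> \<phi> ` \<beta> i"
    proof
      fix x assume x: "x \<in> \<beta>' i"
      show "x \<in> \<phi> ` \<beta> i"
      proof (cases "x \<in> \<beta> i \<inter> U")
        case True
        then have "\<phi> x = x" using U(3) by (auto simp: \<phi>_def)
        then show ?thesis using True by force
      next
        case False
        then have "x = a" "\<beta> i \<inter> K \<noteq> {}" using x by (auto simp: \<beta>'_def split: if_splits)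
        then obtain k where "k \<in> \<beta> i" "k \<in> K" by blast
        then show ?thesis using \<open>x = a\<close> by (force simp: \<phi>_def)
      qed
    qed
    moreover have fb: "finite (\<beta> i)" using bagV[OF i] fV by (rule finite_subset)
    ultimately have "card (\<beta>' i) \<le> card (\<phi> ` \<beta> i)" by (intro card_mono) auto
    also have "\<dots> \<le> card (\<beta> i)" by (rule card_image_le[OF fb])
    also have "\<dots> \<le> 3" using wd i by blast
    finally show ?thesis by simp
  qed
  ultimately show ?thesis unfolding has_tw_le_def by blast
qed




lemma three_elems: assumes "3 \<le> card A"
  shows "\<exists>a b c. a \<in> A \<and> b \<in> A \<and> c \<in> A \<and> a \<noteq> b \<and> a \<noteq> c \<and> b \<noteq> c"
proof -
  obtain T where "T \<subseteq> A" "card T = 3" using obtain_subset_with_card_n[OF assms] by blast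
  then show ?thesis unfolding card_3_iff by blast
qed

lemma le2_cases: assumes "finite N" "card N \<le> 2"
  shows "N = {} \<or> (\<exists>a. N = {a}) \<or> (\<exists>a b. a \<noteq> b \<and> N = {a,b})"
proof -
  have "card N = 0 \<or> card N = 1 \<or> card N = 2" using assms(2) by arith
  then show ?thesis
  proof (elim disjE)
    assume "card N = 0" then show ?thesis using assms(1) by simp
  next
    assume "card N = 1" then show ?thesis by (auto simp: card_1_singleton_iff)
  next
    assume "card N = 2" then show ?thesis by (auto simp: card_2_iff)
  qed
qed

lemma components_conn: assumes "connected_graph W E" shows "components W E = {W}"
proof -
  have "{u\<in>W. reachable W E v u} = W" if "v \<in> W" for v
    using assms that by (auto simp: connected_graph_def)
  moreover have "W \<noteq> {}" using assms by (simp add: connected_graph_def)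
  ultimately show ?thesis unfolding components_def by auto
qed

lemma conn_of_components: assumes "finite W" "W \<noteq> {}" "card (components W E) \<le> 1"
  shows "connected_graph W E"
proof -
  define f where "f = (\<lambda>v. {u\<in>W. reachable W E v u})"
  have cf: "components W E = f ` W" by (auto simp: components_def f_def)
  have "finite (components W E)" using assms(1) cf by simp
  then have eq: "\<forall>x\<in>components W E. \<forall>y\<in>components W E. x = y"
    using assms(3) card_le_Suc0_iff_eq by auto
  show ?thesis unfolding connected_graph_def
  proof (intro conjI ballI)
    show "W \<noteq> {}" by (rule assms(2))
    fix u v assume u: "u \<in> W" and v: "v \<in> W"
    have "f u = f v" using eq u v cf by blast
    moreover have "v \<in> f v" using v reach_refl by (simp add: f_def)
    ultimately have "v \<in> f u" by simp
    then show "reachable W E u v" by (simp add: f_def)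
  qed
qed




theorem mainTheorem10:
  fixes V :: "'a set" and E :: "'a set set" and t :: nat and X S :: "'a set"
  assumes "wf_graph V E"
    and "\<not> trivial_instance V E t"
    and "tidy_modulator V E X"
    and "S \<subseteq> V - X"
    and "biconnected S (induced_edges (del_edges V E X) S)"
  shows "card (boundary V E S) \<le> 2 * card X"
proof -
  have fV: "finite V" using assms(1) by (simp add: wf_graph_def)
  have ntriv: "\<not> treewidth (closed_nbhd V E VH) (torso_edges V E VH) \<le> 2"
    if "VH \<subseteq> V" "EH \<subseteq> E" "\<forall>e\<in>EH. e \<subseteq> VH" "connected_graph VH EH" for VH EH
    using assms(2) that unfolding trivial_instance_def by blast
  have XV: "X \<subseteq> V" and twX: "treewidth (V - X) (del_edges V E X) \<le> 2"
    and twx: "\<forall>x\<in>X. treewidth (V - (X - {x})) (del_edges V E (X - {x})) \<le> 2"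
    using assms(3) by (auto simp: tidy_modulator_def modulator_def)
  have fX: "finite X" using XV fV by (rule finite_subset)
  have SV: "S \<subseteq> V - X" by (rule assms(4))
  have fS: "finite S" using SV fV by (meson finite_Diff finite_subset)
  have delE: "\<forall>e\<in>del_edges V E Y. e \<subseteq> V - Y" for Y by (auto simp: del_edges_def induced_edges_def)
  have delEH: "\<forall>e\<in>E. e \<subseteq> V - Y \<longrightarrow> e \<in> del_edges V E Y" for Y by (auto simp: del_edges_def induced_edges_def)
  have conv: "connected_graph T (induced_edges (del_edges V E X) S') = connected_graph T E"
    if "T \<subseteq> S'" "S' \<subseteq> S" for T S'
  proof -
    have "connected_graph T (induced_edges (del_edges V E X) S') = connected_graph T (del_edges V E X)"
      using that(1) by (rule conn_induced)
    also have "\<dots> = connected_graph T E" unfolding del_edges_def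
      using that SV by (intro conn_induced) auto
    finally show ?thesis .
  qed
  have bic: "connected_graph S (induced_edges (del_edges V E X) S)"
    "\<forall>v\<in>S. \<not> articulation S (induced_edges (del_edges V E X) S) v"
    using assms(5) by (auto simp: biconnected_def)
  have cS: "connected_graph S E" using bic(1) conv[of S S] by simp
  have cS2: "\<forall>c\<in>S. S - {c} \<noteq> {} \<longrightarrow> connected_graph (S - {c}) E"
  proof (intro ballI impI)
    fix c assume c: "c \<in> S" and ne: "S - {c} \<noteq> {}"
    let ?E' = "induced_edges (del_edges V E X) S"
    have "card (components (S - {c}) (induced_edges ?E' (S - {c}))) \<le> card (components S ?E')"
      using bic(2) c by (auto simp: articulation_def)
    also have "\<dots> = 1" using components_conn[OF bic(1)] by simp
    finally have "connected_graph (S - {c}) (induced_edges ?E' (S - {c}))"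
      using fS ne by (intro conn_of_components) auto
    then have "connected_graph (S - {c}) ?E'" by (simp add: conn_induced)
    then show "connected_graph (S - {c}) E" using conv[of "S - {c}" S] by auto
  qed
  obtain IX FX \<beta>X where tdX: "tree_decomp (V - X) (del_edges V E X) IX FX \<beta>X"
    and wdX: "\<forall>i\<in>IX. card (\<beta>X i) \<le> 3"
    using tw_decomp[OF _ delE twX] fV by blast
  define W0 where "W0 = V - X - S"
  define Wx where "Wx = (\<lambda>x. insert x W0)"
  define Z where "Z = (\<lambda>x. {z \<in> Wx x. reachable (Wx x) E x z})"
  define A where "A = (\<lambda>x. {u \<in> S. \<exists>z\<in>Z x. {u,z} \<in> E})"
  have claim1: "card (A x) \<le> 2" if x: "x \<in> X" for x
  proof (rule ccontr)
    assume "\<not> card (A x) \<le> 2"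
    then obtain a b c where abc: "a \<in> A x" "b \<in> A x" "c \<in> A x" "a \<noteq> b" "a \<noteq> c" "b \<noteq> c"
      using three_elems[of "A x"] by auto
    obtain I F \<beta> where td: "tree_decomp (V - (X - {x})) (del_edges V E (X - {x})) I F \<beta>"
      and wd: "\<forall>i\<in>I. card (\<beta> i) \<le> 3"
      using tw_decomp[OF _ delE] twx x fV by blast
    have xW: "x \<in> Wx x" by (simp add: Wx_def)
    have WxV: "Wx x \<subseteq> V - (X - {x})" using x XV by (auto simp: Wx_def W0_def)
    have WxS: "Wx x \<inter> S = {}" using x SV by (auto simp: Wx_def W0_def)
    have ZW: "Z x \<subseteq> Wx x" by (auto simp: Z_def)
    show False
    proof (rule no_three_attach[OF td wd _ delEH, of S "Z x" a b c])
      show "finite (V - (X - {x}))" using fV by simp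
      show "S \<subseteq> V - (X - {x})" using SV by auto
      show "Z x \<subseteq> V - (X - {x})" using ZW WxV by auto
      show "Z x \<inter> S = {}" using ZW WxS by auto
      show "connected_graph (Z x) E" unfolding Z_def by (rule comp_conn[OF xW])
      show "connected_graph S E" by (rule cS)
      show "\<forall>c\<in>S. S - {c} \<noteq> {} \<longrightarrow> connected_graph (S - {c}) E" by (rule cS2)
    qed (use abc in \<open>auto simp: A_def\<close>)
  qed
  have claim3: False if w: "w \<in> W0" and noX: "\<forall>d\<in>{z \<in> W0. reachable W0 E w z}. \<forall>x\<in>X. {d,x} \<notin> E" for w
  proof -
    define D where "D = {z \<in> W0. reachable W0 E w z}"
    have DW: "D \<subseteq> W0" by (auto simp: D_def)
    have wD: "w \<in> D" using w reach_refl[OF w] by (simp add: D_def)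
    have cD: "connected_graph D E" unfolding D_def by (rule comp_conn[OF w])
    define N where "N = nbhd V E D"
    have NS: "N \<subseteq> S"
    proof
      fix v assume "v \<in> N"
      then obtain d where v: "v \<in> V" "v \<notin> D" "d \<in> D" "{d,v} \<in> E" by (auto simp: N_def nbhd_def)
      have "v \<notin> X" using noX v(3,4) by (auto simp: D_def)
      show "v \<in> S"
      proof (rule ccontr)
        assume "v \<notin> S"
        then have vW: "v \<in> W0" using v(1) \<open>v \<notin> X\<close> by (simp add: W0_def)
        have rd: "reachable W0 E w d" using v(3) by (simp add: D_def)
        have dW: "d \<in> W0" using DW v(3) by auto
        have "reachable W0 E w v" using reach_trans[OF rd reach_edge[OF dW vW v(4)]] .
        then show False using vW v(2) by (simp add: D_def)
      qed
    qed
    have DS: "D \<inter> S = {}" using DW by (auto simp: W0_def)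
    have DVX: "D \<subseteq> V - X" using DW by (auto simp: W0_def)
    have fN: "finite N" using NS fS by (rule finite_subset)
    have cardN: "card N \<le> 2"
    proof (rule ccontr)
      assume "\<not> card N \<le> 2"
      then obtain a b c where abc: "a \<in> N" "b \<in> N" "c \<in> N" "a \<noteq> b" "a \<noteq> c" "b \<noteq> c"
        using three_elems[of N] by auto
      have att: "\<exists>z\<in>D. {v,z} \<in> E" if "v \<in> N" for v
        using that by (auto simp: N_def nbhd_def insert_commute)
      show False
      proof (rule no_three_attach[OF tdX wdX _ delEH, of S D a b c])
        show "finite (V - X)" using fV by simp
      qed (use SV DVX DS cD cS cS2 abc NS att in auto)
    qed
    have cl: "closed_nbhd V E D = D \<union> N" by (simp add: closed_nbhd_def N_def)
    have te: "torso_edges V E D = induced_edges E (D \<union> N) \<union> {{u, v} |u v. u \<in> N \<and> v \<in> N \<and> u \<noteq> v}"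
      by (simp add: torso_edges_def cl N_def)
    have UVX: "D \<union> N \<subseteq> V - X" using DVX NS SV by auto
    have indE: "e \<subseteq> D \<union> N \<and> e \<in> del_edges V E X" if "e \<in> induced_edges E (D \<union> N)" for e
      using that UVX by (auto simp: induced_edges_def del_edges_def)
    have "has_tw_le (D \<union> N) (torso_edges V E D) 2"
      using le2_cases[OF fN cardN]
    proof (elim disjE exE conjE)
      assume N0: "N = {}"
      show ?thesis unfolding te
      proof (rule contract_td[OF tdX wdX _ _ _ conn_single, of w])
        show "finite (V - X)" using fV by simp
        show "{w} \<subseteq> V - X" "D \<union> N \<subseteq> V - X" using wD DVX UVX by auto
      qed (use wD N0 indE in auto)
    next
      fix a assume N1: "N = {a}"
      show ?thesis unfolding te
      proof (rule contract_td[OF tdX wdX _ _ _ conn_single, of a])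
        show "finite (V - X)" using fV by simp
        show "{a} \<subseteq> V - X" "D \<union> N \<subseteq> V - X" using N1 UVX by auto
        show "(D \<union> N) \<inter> {a} = {a}" using N1 by auto
      qed (use N1 indE in auto)
    next
      fix a b assume ab: "a \<noteq> b" and N2: "N = {a,b}"
      have aS: "a \<in> S" and bS: "b \<in> S" using NS N2 by auto
      have "reachable S E a b" using cS aS bS by (simp add: connected_graph_def)
      then obtain k y where ky: "k \<in> S - {b}" "y \<in> S" "y \<notin> S - {b}" "{k,y} \<in> E"
        using reach_escape[of S E a b "S - {b}"] aS ab by blast
      then have kb: "{k,b} \<in> E" by auto
      have cK0: "connected_graph (S - {b}) E" using cS2 bS aS ab by auto
      have cK: "connected_graph (S - {b}) (del_edges V E X)"
        using conn_EH[OF cK0 _ delEH] SV by auto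
      show ?thesis unfolding te
      proof (rule contract_td[OF tdX wdX _ _ _ cK])
        show "finite (V - X)" using fV by simp
        show "S - {b} \<subseteq> V - X" "D \<union> N \<subseteq> V - X" using SV UVX by auto
        show "a \<in> S - {b}" "a \<in> D \<union> N" using aS ab N2 by auto
        show "(D \<union> N) \<inter> (S - {b}) = {a}" using DS N2 aS ab by auto
        show "\<forall>e\<in>induced_edges E (D \<union> N) \<union> {{u, v} |u v. u \<in> N \<and> v \<in> N \<and> u \<noteq> v}.
          e \<subseteq> D \<union> N \<and> e \<in> del_edges V E X \<or> (\<exists>v\<in>D \<union> N. e = {a, v} \<and> (\<exists>k\<in>S - {b}. {k, v} \<in> del_edges V E X))"
        proof
          fix e assume "e \<in> induced_edges E (D \<union> N) \<union> {{u, v} |u v. u \<in> N \<and> v \<in> N \<and> u \<noteq> v}"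
          then show "e \<subseteq> D \<union> N \<and> e \<in> del_edges V E X \<or> (\<exists>v\<in>D \<union> N. e = {a, v} \<and> (\<exists>k\<in>S - {b}. {k, v} \<in> del_edges V E X))"
          proof
            assume "e \<in> induced_edges E (D \<union> N)" then show ?thesis using indE by blast
          next
            assume "e \<in> {{u, v} |u v. u \<in> N \<and> v \<in> N \<and> u \<noteq> v}"
            then have "e = {a,b}" using N2 by auto
            moreover have "{k,b} \<in> del_edges V E X" using kb ky(1) bS SV
              by (auto simp: del_edges_def induced_edges_def)
            ultimately show ?thesis using ky(1) N2 by auto
          qed
        qed
      qed
    qed
    then have tw2: "treewidth (closed_nbhd V E D) (torso_edges V E D) \<le> 2" using cl tw_le2 by simp
    have DV: "D \<subseteq> V" using DW by (auto simp: W0_def)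
    have cD': "connected_graph D (induced_edges E D)" using cD by (simp add: conn_induced)
    have i1: "induced_edges E D \<subseteq> E" and i2: "\<forall>e\<in>induced_edges E D. e \<subseteq> D"
      by (auto simp: induced_edges_def)
    show False using ntriv[OF DV i1 i2 cD'] tw2 by simp
  qed
  have claim2: "\<exists>x\<in>X. u \<in> A x" if u: "u \<in> boundary V E S" for u
  proof -
    obtain w where w: "u \<in> S" "w \<in> V" "w \<notin> S" "{u,w} \<in> E" using u by (auto simp: boundary_def)
    show ?thesis
    proof (cases "w \<in> X")
      case True
      have "w \<in> Wx w" by (simp add: Wx_def)
      then have "w \<in> Z w" using reach_refl by (simp add: Z_def)
      then show ?thesis using True w by (auto simp: A_def)
    next
      case False
      then have wW: "w \<in> W0" using w by (simp add: W0_def)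
      show ?thesis
      proof (cases "\<exists>d\<in>{z \<in> W0. reachable W0 E w z}. \<exists>x\<in>X. {d,x} \<in> E")
        case True
        then obtain d x where dx: "d \<in> W0" "reachable W0 E w d" "x \<in> X" "{d,x} \<in> E" by blast
        have sub: "W0 \<subseteq> Wx x" by (auto simp: Wx_def)
        have r1: "reachable (Wx x) E w d" using dx(2) sub by (rule reach_mono_set)
        have r2: "reachable (Wx x) E x d" using dx sub by (intro reach_edge) (auto simp: Wx_def insert_commute)
        have "reachable (Wx x) E x w" using reach_trans[OF r2 reach_sym[OF r1]] .
        then have "w \<in> Z x" using wW sub by (auto simp: Z_def)
        then show ?thesis using dx(3) w by (auto simp: A_def)
      next
        case False
        then show ?thesis using claim3[OF wW] by blast
      qed
    qed
  qed
  have AS: "A x \<subseteq> S" for x by (auto simp: A_def)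
  have "boundary V E S \<subseteq> (\<Union>x\<in>X. A x)" using claim2 by blast
  moreover have "finite (\<Union>x\<in>X. A x)" using fS AS by (meson UN_least finite_subset)
  ultimately have "card (boundary V E S) \<le> card (\<Union>x\<in>X. A x)" by (rule card_mono[rotated])
  also have "\<dots> \<le> (\<Sum>x\<in>X. card (A x))" by (rule card_UN_le[OF fX])
  also have "\<dots> \<le> (\<Sum>x\<in>X. 2)" using claim1 by (intro sum_mono) auto
  also have "\<dots> = 2 * card X" by simp
  finally show ?thesis .
qed


end
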